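(* Let $G=(V,E)$ be a hypergraph and let $(X_1,\dots,X_p,W_0,Z_0)$ be a partition of $V$ for some integer $p\ge1$. Let $Q\subset V$ be a set such that \[Y_i:=X_i\setminus Q\neq\emptyset\ \ \forall i\in[p],\quad Y_{p+1}:=Q\cap Z_0\neq\emptyset,\quad Z:=Z_0\setminus Q\neq\emptyset,\quad W:=W_0\cup(Q\setminus Z_0)\neq\emptyset.\] Then $(Y_1,\dots,Y_p,Y_{p+1},W,Z)$ is a partition of $V$ and \[\sigma(Y_1,\dots,Y_{p+1},W,Z)\le\sigma(X_1,\dots,X_p,W_0,Z_0)+d(Q)-d(W_0\cap Q).\]
   Context: A hypergraph $G=(V,E)$ has finite vertex set $V$ and finite multiset $E$ of hyperedges (subsets of $V$). For $X\subseteq V$, $d(X)$ is the number of hyperedges meeting both $X$ and $V\setminus X$. For a partition $(Y_1,\dots,Y_m,W,Z)$ of $V$: $\mathrm{cost}(Y_1,\dots,Y_m,W,Z)$ is the number of hyperedges meeting at least two of its parts; $\mathrm{cost}(W,Z)$ is the number of hyperedges $e\subseteq W\cup Z$ meeting both $W$ and $Z$; $\alpha(Y_1,\dots,Y_m,W,Z)$ is the number of hyperedges meeting $Z$ and at least two of $Y_1,\dots,Y_m,W$; $\beta(Y_1,\dots,Y_m,Z)$ is the number of hyperedges disjoint from $Z$ meeting at least two of $Y_1,\dots,Y_m$; and $\sigma(Y_1,\dots,Y_m,W,Z):=\mathrm{cost}(Y_1,\dots,Y_m,W,Z)+\mathrm{cost}(W,Z)+\alpha(Y_1,\dots,Y_m,W,Z)+\beta(Y_1,\dots,Y_m,Z)$.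 *)

theory Defs
  imports Main "HOL-Library.Multiset"
begin

definition hypergraph :: "'a set \<Rightarrow> 'a set multiset \<Rightarrow> bool" where
  "hypergraph V E \<longleftrightarrow> finite V \<and> (\<forall>e \<in># E. e \<subseteq> V)"

definition is_partition :: "'a set \<Rightarrow> 'a set list \<Rightarrow> bool" where
  "is_partition V Ps \<longleftrightarrow>
     (\<Union>(set Ps) = V) \<and>
     (\<forall>i < length Ps. \<forall>j < length Ps. i \<noteq> j \<longrightarrow> Ps ! i \<inter> Ps ! j = {})"

definition dcut :: "'a set \<Rightarrow> 'a set multiset \<Rightarrow> 'a set \<Rightarrow> nat" where
  "dcut V E X = size (filter_mset (\<lambda>e. e \<inter> X \<noteq> {} \<and> e \<inter> (V - X) \<noteq> {}) E)"

definition meets_two :: "'a set \<Rightarrow> 'a set list \<Rightarrow> bool" where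
  "meets_two e Ps \<longleftrightarrow> card {i. i < length Ps \<and> e \<inter> Ps ! i \<noteq> {}} \<ge> 2"

definition cost :: "'a set multiset \<Rightarrow> 'a set list \<Rightarrow> nat" where
  "cost E Ps = size (filter_mset (\<lambda>e. meets_two e Ps) E)"

definition cost2 :: "'a set multiset \<Rightarrow> 'a set \<Rightarrow> 'a set \<Rightarrow> nat" where
  "cost2 E W Z = size (filter_mset (\<lambda>e. e \<subseteq> W \<union> Z \<and> e \<inter> W \<noteq> {} \<and> e \<inter> Z \<noteq> {}) E)"

definition alpha :: "'a set multiset \<Rightarrow> 'a set list \<Rightarrow> 'a set \<Rightarrow> 'a set \<Rightarrow> nat" where
  "alpha E Ys W Z = size (filter_mset (\<lambda>e. e \<inter> Z \<noteq> {} \<and> meets_two e (Ys @ [W])) E)"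

definition beta :: "'a set multiset \<Rightarrow> 'a set list \<Rightarrow> 'a set \<Rightarrow> nat" where
  "beta E Ys Z = size (filter_mset (\<lambda>e. e \<inter> Z = {} \<and> meets_two e Ys) E)"

definition sigma :: "'a set multiset \<Rightarrow> 'a set list \<Rightarrow> 'a set \<Rightarrow> 'a set \<Rightarrow> nat" where
  "sigma E Ys W Z = cost E (Ys @ [W, Z]) + cost2 E W Z + alpha E Ys W Z + beta E Ys Z"

end

theory Submission imports Defs begin
lemma arith_core:
  fixes a b c :: nat
  assumes "a \<le> b" "c \<le> b" "b \<le> a + c"
  shows "int (of_bool (2 \<le> a + of_bool zq + (of_bool (w0q\<or>w0n\<or>c>0) + of_bool zn))
   + of_bool (a=0 \<and> \<not>zq \<and> (w0q\<or>w0n\<or>c>0) \<and> zn)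
   + of_bool (zn \<and> 2 \<le> a + of_bool zq + of_bool (w0q\<or>w0n\<or>c>0))
   + of_bool (\<not>zn \<and> 2 \<le> a + of_bool zq))
   \<le> int (of_bool (2 \<le> b + (of_bool (w0q\<or>w0n) + of_bool (zq\<or>zn)))
   + of_bool (b=0 \<and> (w0q\<or>w0n) \<and> (zq\<or>zn))
   + of_bool ((zq\<or>zn) \<and> 2 \<le> b + of_bool (w0q\<or>w0n))
   + of_bool (\<not>(zq\<or>zn) \<and> 2 \<le> b))
   + int (of_bool ((w0q\<or>zq\<or>c>0) \<and> (w0n\<or>zn\<or>a>0)))
   - int (of_bool (w0q \<and> (w0n\<or>zq\<or>zn\<or>b>0)))"
  using assms
  by (cases w0q; cases w0n; cases zq; cases zn; simp; arith)

lemma sf: "size (filter_mset P (add_mset x E)) = of_bool (P x) + size (filter_mset P E)"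
  by simp

lemma size_filter_key:
  assumes "\<And>e. e \<in># E \<Longrightarrow> int (of_bool (Na e) + of_bool (Nb e) + of_bool (Nc e) + of_bool (Nd e))
     \<le> int (of_bool (Oa e) + of_bool (Ob e) + of_bool (Oc e) + of_bool (Od e)) + int (of_bool (D e)) - int (of_bool (H e))"
  shows "int (size (filter_mset Na E) + size (filter_mset Nb E) + size (filter_mset Nc E) + size (filter_mset Nd E))
     \<le> int (size (filter_mset Oa E) + size (filter_mset Ob E) + size (filter_mset Oc E) + size (filter_mset Od E))
       + int (size (filter_mset D E)) - int (size (filter_mset H E))"
  using assms
proof (induction E)
  case empty
  then show ?case by simp
next
  case (add x E)
  have "int (of_bool (Na x) + of_bool (Nb x) + of_bool (Nc x) + of_bool (Nd x))
     \<le> int (of_bool (Oa x) + of_bool (Ob x) + of_bool (Oc x) + of_bool (Od x)) + int (of_bool (D x)) - int (of_bool (H x))"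
    using add.prems by simp
  moreover have "int (size (filter_mset Na E) + size (filter_mset Nb E) + size (filter_mset Nc E) + size (filter_mset Nd E))
     \<le> int (size (filter_mset Oa E) + size (filter_mset Ob E) + size (filter_mset Oc E) + size (filter_mset Od E))
       + int (size (filter_mset D E)) - int (size (filter_mset H E))"
    using add.IH add.prems by simp
  ultimately show ?case unfolding sf of_nat_add by linarith
qed

lemma lf1: "length (filter P [x]) = of_bool (P x)" by simp
lemma lf2: "length (filter P [x, y]) = of_bool (P x) + of_bool (P y)" by simp

lemma m2_len: "meets_two e Ps \<longleftrightarrow> 2 \<le> length (filter (\<lambda>P. e \<inter> P \<noteq> {}) Ps)"
  by (simp add: meets_two_def length_filter_conv_card)

lemma len_filter_mono: "(\<And>x. P x \<Longrightarrow> R x) \<Longrightarrow> length (filter P xs) \<le> length (filter R xs)"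
  by (induction xs) auto

lemma len_filter_or:
  assumes h: "\<And>x. S x \<Longrightarrow> P x \<or> R x"
  shows "length (filter S xs) \<le> length (filter P xs) + length (filter R xs)"
proof (induction xs)
  case Nil
  then show ?case by simp
next
  case (Cons y ys)
  have "S y \<Longrightarrow> P y \<or> R y" by (rule h)
  then show ?case using Cons.IH by (cases "S y"; cases "P y"; cases "R y") simp_all
qed
lemma setfacts:
  assumes eV': "\<And>x. x \<in> e \<Longrightarrow> x \<in> W0 \<or> x \<in> Z0 \<or> (\<exists>X\<in>set Xs. x \<in> X)"
  and dW: "\<And>X. X \<in> set Xs \<Longrightarrow> X \<inter> W0 = {}"
  and dZ: "\<And>X. X \<in> set Xs \<Longrightarrow> X \<inter> Z0 = {}"
  and dWZ: "W0 \<inter> Z0 = {}" and eV: "e \<subseteq> V" and V: "V = \<Union>(set Xs) \<union> W0 \<union> Z0"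
shows s1:
  "(e \<inter> (W0 \<union> (Q - Z0)) \<noteq> {}) = (e \<inter> (W0 \<inter> Q) \<noteq> {} \<or> e \<inter> (W0 - Q) \<noteq> {} \<or> (\<exists>X\<in>set Xs. e \<inter> X \<inter> Q \<noteq> {}))"
  and s2: "(e \<inter> Q \<noteq> {}) = (e \<inter> (W0 \<inter> Q) \<noteq> {} \<or> e \<inter> (Q \<inter> Z0) \<noteq> {} \<or> (\<exists>X\<in>set Xs. e \<inter> X \<inter> Q \<noteq> {}))"
  and s3: "(e \<inter> (V - Q) \<noteq> {}) = (e \<inter> (W0 - Q) \<noteq> {} \<or> e \<inter> (Z0 - Q) \<noteq> {} \<or> (\<exists>X\<in>set Xs. e \<inter> (X - Q) \<noteq> {}))"
  and s4: "(e \<inter> (V - W0 \<inter> Q) \<noteq> {}) = (e \<inter> (W0 - Q) \<noteq> {} \<or> e \<inter> (Q \<inter> Z0) \<noteq> {} \<or> e \<inter> (Z0 - Q) \<noteq> {} \<or> (\<exists>X\<in>set Xs. e \<inter> X \<noteq> {}))"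
  and s5: "(e \<subseteq> W0 \<union> Z0) = (\<not> (\<exists>X\<in>set Xs. e \<inter> X \<noteq> {}))"
  and s6: "(e \<subseteq> (W0 \<union> (Q - Z0)) \<union> (Z0 - Q)) = (\<not> (\<exists>X\<in>set Xs. e \<inter> (X - Q) \<noteq> {}) \<and> \<not> e \<inter> (Q \<inter> Z0) \<noteq> {})"
proof -
  show "(e \<inter> (W0 \<union> (Q - Z0)) \<noteq> {}) = (e \<inter> (W0 \<inter> Q) \<noteq> {} \<or> e \<inter> (W0 - Q) \<noteq> {} \<or> (\<exists>X\<in>set Xs. e \<inter> X \<inter> Q \<noteq> {}))"
  proof
    assume "e \<inter> (W0 \<union> (Q - Z0)) \<noteq> {}"
    then obtain x where x: "x \<in> e" "x \<in> W0 \<or> (x \<in> Q \<and> x \<notin> Z0)" by blast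
    from eV'[OF x(1)] x show "e \<inter> (W0 \<inter> Q) \<noteq> {} \<or> e \<inter> (W0 - Q) \<noteq> {} \<or> (\<exists>X\<in>set Xs. e \<inter> X \<inter> Q \<noteq> {})"
      by blast
  next
    assume "e \<inter> (W0 \<inter> Q) \<noteq> {} \<or> e \<inter> (W0 - Q) \<noteq> {} \<or> (\<exists>X\<in>set Xs. e \<inter> X \<inter> Q \<noteq> {})"
    then show "e \<inter> (W0 \<union> (Q - Z0)) \<noteq> {}" using dZ by blast
  qed
  show "(e \<inter> Q \<noteq> {}) = (e \<inter> (W0 \<inter> Q) \<noteq> {} \<or> e \<inter> (Q \<inter> Z0) \<noteq> {} \<or> (\<exists>X\<in>set Xs. e \<inter> X \<inter> Q \<noteq> {}))"
  proof
    assume "e \<inter> Q \<noteq> {}"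
    then obtain x where x: "x \<in> e" "x \<in> Q" by blast
    from eV'[OF x(1)] x show "e \<inter> (W0 \<inter> Q) \<noteq> {} \<or> e \<inter> (Q \<inter> Z0) \<noteq> {} \<or> (\<exists>X\<in>set Xs. e \<inter> X \<inter> Q \<noteq> {})"
      by blast
  qed blast
  show "(e \<inter> (V - Q) \<noteq> {}) = (e \<inter> (W0 - Q) \<noteq> {} \<or> e \<inter> (Z0 - Q) \<noteq> {} \<or> (\<exists>X\<in>set Xs. e \<inter> (X - Q) \<noteq> {}))"
  proof
    assume "e \<inter> (V - Q) \<noteq> {}"
    then obtain x where x: "x \<in> e" "x \<notin> Q" by blast
    from eV'[OF x(1)] x show "e \<inter> (W0 - Q) \<noteq> {} \<or> e \<inter> (Z0 - Q) \<noteq> {} \<or> (\<exists>X\<in>set Xs. e \<inter> (X - Q) \<noteq> {})"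
      by blast
  next
    assume "e \<inter> (W0 - Q) \<noteq> {} \<or> e \<inter> (Z0 - Q) \<noteq> {} \<or> (\<exists>X\<in>set Xs. e \<inter> (X - Q) \<noteq> {})"
    then show "e \<inter> (V - Q) \<noteq> {}" using eV by blast
  qed
  show "(e \<inter> (V - W0 \<inter> Q) \<noteq> {}) = (e \<inter> (W0 - Q) \<noteq> {} \<or> e \<inter> (Q \<inter> Z0) \<noteq> {} \<or> e \<inter> (Z0 - Q) \<noteq> {} \<or> (\<exists>X\<in>set Xs. e \<inter> X \<noteq> {}))"
  proof
    assume "e \<inter> (V - W0 \<inter> Q) \<noteq> {}"
    then obtain x where x: "x \<in> e" "x \<notin> W0 \<inter> Q" by blast
    from eV'[OF x(1)] x show "e \<inter> (W0 - Q) \<noteq> {} \<or> e \<inter> (Q \<inter> Z0) \<noteq> {} \<or> e \<inter> (Z0 - Q) \<noteq> {} \<or> (\<exists>X\<in>set Xs. e \<inter> X \<noteq> {})"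
      by blast
  next
    assume a: "e \<inter> (W0 - Q) \<noteq> {} \<or> e \<inter> (Q \<inter> Z0) \<noteq> {} \<or> e \<inter> (Z0 - Q) \<noteq> {} \<or> (\<exists>X\<in>set Xs. e \<inter> X \<noteq> {})"
    have "W0 \<inter> Z0 = {}" by (rule dWZ)
    then show "e \<inter> (V - W0 \<inter> Q) \<noteq> {}" using a eV dW by blast
  qed
  show "(e \<subseteq> W0 \<union> Z0) = (\<not> (\<exists>X\<in>set Xs. e \<inter> X \<noteq> {}))"
  proof
    assume a: "e \<subseteq> W0 \<union> Z0"
    show "\<not> (\<exists>X\<in>set Xs. e \<inter> X \<noteq> {})"
    proof
      assume "\<exists>X\<in>set Xs. e \<inter> X \<noteq> {}"
      then obtain X x where "X \<in> set Xs" "x \<in> e" "x \<in> X" by blast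
      then show False using a dW dZ by blast
    qed
  next
    assume a: "\<not> (\<exists>X\<in>set Xs. e \<inter> X \<noteq> {})"
    show "e \<subseteq> W0 \<union> Z0"
    proof
      fix x assume "x \<in> e" then show "x \<in> W0 \<union> Z0" using eV'[of x] a by blast
    qed
  qed
  show "(e \<subseteq> (W0 \<union> (Q - Z0)) \<union> (Z0 - Q)) = (\<not> (\<exists>X\<in>set Xs. e \<inter> (X - Q) \<noteq> {}) \<and> \<not> e \<inter> (Q \<inter> Z0) \<noteq> {})"
  proof
    assume a: "e \<subseteq> (W0 \<union> (Q - Z0)) \<union> (Z0 - Q)"
    have "\<not> (\<exists>X\<in>set Xs. e \<inter> (X - Q) \<noteq> {})"
    proof
      assume "\<exists>X\<in>set Xs. e \<inter> (X - Q) \<noteq> {}"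
      then obtain X x where X: "X \<in> set Xs" "x \<in> e" "x \<in> X" "x \<notin> Q" by blast
      then have "x \<in> W0 \<or> x \<in> Z0" using a by blast
      then show False using dW[OF X(1)] dZ[OF X(1)] X(3) by blast
    qed
    moreover have "\<not> e \<inter> (Q \<inter> Z0) \<noteq> {}" using a dWZ by blast
    ultimately show "\<not> (\<exists>X\<in>set Xs. e \<inter> (X - Q) \<noteq> {}) \<and> \<not> e \<inter> (Q \<inter> Z0) \<noteq> {}" by blast
  next
    assume a: "\<not> (\<exists>X\<in>set Xs. e \<inter> (X - Q) \<noteq> {}) \<and> \<not> e \<inter> (Q \<inter> Z0) \<noteq> {}"
    show "e \<subseteq> (W0 \<union> (Q - Z0)) \<union> (Z0 - Q)"
    proof
      fix x assume x: "x \<in> e"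
      have "x \<in> W0 \<or> x \<in> Z0 \<or> (\<exists>X\<in>set Xs. x \<in> X)" using eV' x by blast
      moreover {
        assume "\<exists>X\<in>set Xs. x \<in> X"
        then obtain X where X: "X \<in> set Xs" "x \<in> X" by blast
        then have "x \<in> Q" using a x by blast
        moreover have "x \<notin> Z0" using dZ[OF X(1)] X(2) by blast
        ultimately have "x \<in> Q - Z0" by blast }
      moreover {
        assume "x \<in> Z0" then have "x \<notin> Q" using a x by blast }
      ultimately show "x \<in> (W0 \<union> (Q - Z0)) \<union> (Z0 - Q)" by blast
    qed
  qed
qed

theorem lemma3p3:
  fixes V :: "'a set" and E :: "'a set multiset"
    and Xs :: "'a set list" and W0 Z0 Q :: "'a set"
  assumes "hypergraph V E"
    and "length Xs \<ge> 1"
    and "is_partition V (Xs @ [W0, Z0])"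
    and "Q \<subseteq> V"
    and "\<forall>X \<in> set Xs. X - Q \<noteq> {}"
    and "Q \<inter> Z0 \<noteq> {}"
    and "Z0 - Q \<noteq> {}"
    and "W0 \<union> (Q - Z0) \<noteq> {}"
  shows "is_partition V (map (\<lambda>X. X - Q) Xs @ [Q \<inter> Z0] @ [W0 \<union> (Q - Z0), Z0 - Q])
    \<and> int (sigma E (map (\<lambda>X. X - Q) Xs @ [Q \<inter> Z0]) (W0 \<union> (Q - Z0)) (Z0 - Q))
        \<le> int (sigma E Xs W0 Z0) + int (dcut V E Q) - int (dcut V E (W0 \<inter> Q))"

proof -
  let ?n = "length Xs"
  let ?L = "Xs @ [W0, Z0]"
  have Vfin: "\<forall>e\<in>#E. e \<subseteq> V" using assms(1) by (simp add: hypergraph_def)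
  have P: "\<Union>(set ?L) = V" and D: "\<And>i j. i < length ?L \<Longrightarrow> j < length ?L \<Longrightarrow> i \<noteq> j \<Longrightarrow> ?L ! i \<inter> ?L ! j = {}"
    using assms(3) unfolding is_partition_def by blast+
  have V: "V = \<Union>(set Xs) \<union> W0 \<union> Z0" using P by auto
  have dW: "\<And>X. X \<in> set Xs \<Longrightarrow> X \<inter> W0 = {}"
  proof -
    fix X assume "X \<in> set Xs"
    then obtain i where i: "i < ?n" "X = Xs ! i" by (metis in_set_conv_nth)
    show "X \<inter> W0 = {}" using D[of i ?n] i by (simp add: nth_append)
  qed
  have dZ: "\<And>X. X \<in> set Xs \<Longrightarrow> X \<inter> Z0 = {}"
  proof -
    fix X assume "X \<in> set Xs"
    then obtain i where i: "i < ?n" "X = Xs ! i" by (metis in_set_conv_nth)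
    show "X \<inter> Z0 = {}" using D[of i "Suc ?n"] i by (simp add: nth_append)
  qed
  have dWZ: "W0 \<inter> Z0 = {}" using D[of ?n "Suc ?n"] by (simp add: nth_append)
  have dXX: "\<And>i j. i < ?n \<Longrightarrow> j < ?n \<Longrightarrow> i \<noteq> j \<Longrightarrow> Xs ! i \<inter> Xs ! j = {}"
  proof -
    fix i j assume h: "i < ?n" "j < ?n" "i \<noteq> j"
    have "?L ! i \<inter> ?L ! j = {}" using D[of i j] h by simp
    then show "Xs ! i \<inter> Xs ! j = {}" using h by (simp add: nth_append)
  qed
  let ?L' = "map (\<lambda>X. X - Q) Xs @ [Q \<inter> Z0] @ [W0 \<union> (Q - Z0), Z0 - Q]"
  have part: "is_partition V ?L'"
    unfolding is_partition_def
  proof (intro conjI allI impI)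
    show "\<Union>(set ?L') = V" using V assms(4) by auto
  next
    fix i j assume ij: "i < length ?L'" "j < length ?L'" "i \<noteq> j"
    have n1: "\<And>k. k < ?n \<Longrightarrow> ?L' ! k = Xs ! k - Q" by (simp add: nth_append)
    have n2: "?L' ! ?n = Q \<inter> Z0" by (simp add: nth_append)
    have n3: "?L' ! Suc ?n = W0 \<union> (Q - Z0)" by (simp add: nth_append)
    have n4: "?L' ! Suc (Suc ?n) = Z0 - Q" by (simp add: nth_append)
    have dW': "\<And>k. k < ?n \<Longrightarrow> Xs ! k \<inter> W0 = {}" using dW by simp
    have dZ': "\<And>k. k < ?n \<Longrightarrow> Xs ! k \<inter> Z0 = {}" using dZ by simp
    have ki: "i < ?n \<or> i = ?n \<or> i = Suc ?n \<or> i = Suc (Suc ?n)" using ij(1) by auto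
    have kj: "j < ?n \<or> j = ?n \<or> j = Suc ?n \<or> j = Suc (Suc ?n)" using ij(2) by auto
    show "?L' ! i \<inter> ?L' ! j = {}"
      using ki kj
    proof (elim disjE)
      assume "i < ?n" "j < ?n" then show ?thesis using n1 dXX[of i j] ij(3) by auto
    next
      assume "i < ?n" "j = ?n" then show ?thesis using n1 n2 by auto
    next
      assume "i < ?n" "j = Suc ?n" then show ?thesis using n1 n3 dW'[of i] by auto
    next
      assume "i < ?n" "j = Suc (Suc ?n)" then show ?thesis using n1 n4 dZ'[of i] by auto
    next
      assume "j < ?n" "i = ?n" then show ?thesis using n1 n2 by auto
    next
      assume "j < ?n" "i = Suc ?n" then show ?thesis using n1 n3 dW'[of j] by auto
    next
      assume "j < ?n" "i = Suc (Suc ?n)" then show ?thesis using n1 n4 dZ'[of j] by auto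
    qed (use ij(3) n2 n3 n4 dWZ in auto)
  qed
  have edge: "int (of_bool (meets_two e ((map (\<lambda>X. X - Q) Xs @ [Q \<inter> Z0]) @ [W0 \<union> (Q - Z0), Z0 - Q]))
       + of_bool (e \<subseteq> (W0 \<union> (Q - Z0)) \<union> (Z0 - Q) \<and> e \<inter> (W0 \<union> (Q - Z0)) \<noteq> {} \<and> e \<inter> (Z0 - Q) \<noteq> {})
       + of_bool (e \<inter> (Z0 - Q) \<noteq> {} \<and> meets_two e ((map (\<lambda>X. X - Q) Xs @ [Q \<inter> Z0]) @ [W0 \<union> (Q - Z0)]))
       + of_bool (e \<inter> (Z0 - Q) = {} \<and> meets_two e (map (\<lambda>X. X - Q) Xs @ [Q \<inter> Z0])))
     \<le> int (of_bool (meets_two e (Xs @ [W0, Z0]))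
       + of_bool (e \<subseteq> W0 \<union> Z0 \<and> e \<inter> W0 \<noteq> {} \<and> e \<inter> Z0 \<noteq> {})
       + of_bool (e \<inter> Z0 \<noteq> {} \<and> meets_two e (Xs @ [W0]))
       + of_bool (e \<inter> Z0 = {} \<and> meets_two e Xs))
       + int (of_bool (e \<inter> Q \<noteq> {} \<and> e \<inter> (V - Q) \<noteq> {}))
       - int (of_bool (e \<inter> (W0 \<inter> Q) \<noteq> {} \<and> e \<inter> (V - W0 \<inter> Q) \<noteq> {}))"
    if eE: "e \<in># E" for e
  proof -
    have eV: "e \<subseteq> V" using eE Vfin by blast
    define a where "a = length (filter (\<lambda>X. e \<inter> (X - Q) \<noteq> {}) Xs)"
    define b where "b = length (filter (\<lambda>X. e \<inter> X \<noteq> {}) Xs)"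
    define c where "c = length (filter (\<lambda>X. e \<inter> X \<inter> Q \<noteq> {}) Xs)"
    define w0q where "w0q = (e \<inter> (W0 \<inter> Q) \<noteq> {})"
    define w0n where "w0n = (e \<inter> (W0 - Q) \<noteq> {})"
    define zq where "zq = (e \<inter> (Q \<inter> Z0) \<noteq> {})"
    define zn where "zn = (e \<inter> (Z0 - Q) \<noteq> {})"
    have ab: "a \<le> b" unfolding a_def b_def by (rule len_filter_mono) auto
    have cb: "c \<le> b" unfolding c_def b_def by (rule len_filter_mono) auto
    have bac: "b \<le> a + c" unfolding a_def b_def c_def by (rule len_filter_or) auto
    have a0: "(a > 0) = (\<exists>X\<in>set Xs. e \<inter> (X - Q) \<noteq> {})"
      unfolding a_def by (simp add: filter_empty_conv)
    have b0: "(b > 0) = (\<exists>X\<in>set Xs. e \<inter> X \<noteq> {})"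
      unfolding b_def by (simp add: filter_empty_conv)
    have c0: "(c > 0) = (\<exists>X\<in>set Xs. e \<inter> X \<inter> Q \<noteq> {})"
      unfolding c_def by (simp add: filter_empty_conv)
    have s1: "(e \<inter> W0 \<noteq> {}) = (w0q \<or> w0n)" unfolding w0q_def w0n_def by blast
    have s2: "(e \<inter> Z0 \<noteq> {}) = (zq \<or> zn)" unfolding zq_def zn_def by blast
    have eV': "\<And>x. x \<in> e \<Longrightarrow> x \<in> W0 \<or> x \<in> Z0 \<or> (\<exists>X\<in>set Xs. x \<in> X)"
      using eV V by blast
    note sf = setfacts[OF eV' dW dZ dWZ eV V]
    have s3: "(e \<inter> (W0 \<union> (Q - Z0)) \<noteq> {}) = (w0q \<or> w0n \<or> c > 0)"
      unfolding w0q_def w0n_def c0 by (rule sf(1))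
    have s4: "(e \<inter> Q \<noteq> {}) = (w0q \<or> zq \<or> c > 0)"
      unfolding w0q_def zq_def c0 by (rule sf(2))
    have s5: "(e \<inter> (V - Q) \<noteq> {}) = (w0n \<or> zn \<or> a > 0)"
      unfolding w0n_def zn_def a0 by (rule sf(3))
    have s6: "(e \<inter> (V - W0 \<inter> Q) \<noteq> {}) = (w0n \<or> zq \<or> zn \<or> b > 0)"
      unfolding w0n_def zq_def zn_def b0 by (rule sf(4))
    have s7: "(e \<subseteq> W0 \<union> Z0) = (b = 0)"
      using sf(5) b0 by auto
    have s8: "(e \<subseteq> (W0 \<union> (Q - Z0)) \<union> (Z0 - Q)) = (a = 0 \<and> \<not> zq)"
      using sf(6) a0 unfolding zq_def by auto
    have fm: "length (filter (\<lambda>P. e \<inter> P \<noteq> {}) (map (\<lambda>X. X - Q) Xs)) = a"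
      unfolding a_def by (simp add: o_def)
    have fb: "length (filter (\<lambda>P. e \<inter> P \<noteq> {}) Xs) = b" unfolding b_def by simp
    have zq': "(e \<inter> (Q \<inter> Z0) \<noteq> {}) = zq" unfolding zq_def by simp
    have zn': "(e \<inter> (Z0 - Q) \<noteq> {}) = zn" unfolding zn_def by simp
    have zn'': "(e \<inter> (Z0 - Q) = {}) = (\<not> zn)" unfolding zn_def by simp
    have s2': "(e \<inter> Z0 = {}) = (\<not> (zq \<or> zn))" using s2 by blast
    have n1: "meets_two e ((map (\<lambda>X. X - Q) Xs @ [Q \<inter> Z0]) @ [W0 \<union> (Q - Z0), Z0 - Q])
       = (2 \<le> a + of_bool zq + (of_bool (w0q\<or>w0n\<or>c>0) + of_bool zn))"
      by (simp only: m2_len filter_append length_append fm lf1 lf2 zq' zn' s3)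
    have n2: "(e \<subseteq> (W0 \<union> (Q - Z0)) \<union> (Z0 - Q) \<and> e \<inter> (W0 \<union> (Q - Z0)) \<noteq> {} \<and> e \<inter> (Z0 - Q) \<noteq> {})
       = (a=0 \<and> \<not>zq \<and> (w0q\<or>w0n\<or>c>0) \<and> zn)"
      by (simp only: s8 s3 zn' conj_assoc)
    have n3: "(e \<inter> (Z0 - Q) \<noteq> {} \<and> meets_two e ((map (\<lambda>X. X - Q) Xs @ [Q \<inter> Z0]) @ [W0 \<union> (Q - Z0)]))
       = (zn \<and> 2 \<le> a + of_bool zq + of_bool (w0q\<or>w0n\<or>c>0))"
      by (simp only: m2_len filter_append length_append fm lf1 zq' zn' s3)
    have n4: "(e \<inter> (Z0 - Q) = {} \<and> meets_two e (map (\<lambda>X. X - Q) Xs @ [Q \<inter> Z0]))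
       = (\<not>zn \<and> 2 \<le> a + of_bool zq)"
      by (simp only: m2_len filter_append length_append fm lf1 zq' zn'')
    have o1: "meets_two e (Xs @ [W0, Z0]) = (2 \<le> b + (of_bool (w0q\<or>w0n) + of_bool (zq\<or>zn)))"
      by (simp only: m2_len filter_append length_append fb lf2 s1 s2)
    have o2: "(e \<subseteq> W0 \<union> Z0 \<and> e \<inter> W0 \<noteq> {} \<and> e \<inter> Z0 \<noteq> {}) = (b=0 \<and> (w0q\<or>w0n) \<and> (zq\<or>zn))"
      by (simp only: s7 s1 s2)
    have o3: "(e \<inter> Z0 \<noteq> {} \<and> meets_two e (Xs @ [W0])) = ((zq\<or>zn) \<and> 2 \<le> b + of_bool (w0q\<or>w0n))"
      by (simp only: m2_len filter_append length_append fb lf1 s1 s2)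
    have o4: "(e \<inter> Z0 = {} \<and> meets_two e Xs) = (\<not>(zq\<or>zn) \<and> 2 \<le> b)"
      by (simp only: m2_len fb s2')
    have dd: "(e \<inter> Q \<noteq> {} \<and> e \<inter> (V - Q) \<noteq> {}) = ((w0q\<or>zq\<or>c>0) \<and> (w0n\<or>zn\<or>a>0))"
      by (simp only: s4 s5)
    have hh: "(e \<inter> (W0 \<inter> Q) \<noteq> {} \<and> e \<inter> (V - W0 \<inter> Q) \<noteq> {}) = (w0q \<and> (w0n\<or>zq\<or>zn\<or>b>0))"
      unfolding s6 w0q_def by (rule refl)
    note core = arith_core[OF ab cb bac, of zq w0q w0n zn]
    show ?thesis
      unfolding n1 n2 n3 n4 o1 o2 o3 o4 dd hh by (rule core)
  qed
  have ineq: "int (sigma E (map (\<lambda>X. X - Q) Xs @ [Q \<inter> Z0]) (W0 \<union> (Q - Z0)) (Z0 - Q))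
        \<le> int (sigma E Xs W0 Z0) + int (dcut V E Q) - int (dcut V E (W0 \<inter> Q))"
    unfolding sigma_def cost_def cost2_def alpha_def beta_def dcut_def
    by (rule size_filter_key[where
       Na = "\<lambda>e. meets_two e ((map (\<lambda>X. X - Q) Xs @ [Q \<inter> Z0]) @ [W0 \<union> (Q - Z0), Z0 - Q])" and
       Nb = "\<lambda>e. e \<subseteq> (W0 \<union> (Q - Z0)) \<union> (Z0 - Q) \<and> e \<inter> (W0 \<union> (Q - Z0)) \<noteq> {} \<and> e \<inter> (Z0 - Q) \<noteq> {}" and
       Nc = "\<lambda>e. e \<inter> (Z0 - Q) \<noteq> {} \<and> meets_two e ((map (\<lambda>X. X - Q) Xs @ [Q \<inter> Z0]) @ [W0 \<union> (Q - Z0)])" and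
       Nd = "\<lambda>e. e \<inter> (Z0 - Q) = {} \<and> meets_two e (map (\<lambda>X. X - Q) Xs @ [Q \<inter> Z0])" and
       Oa = "\<lambda>e. meets_two e (Xs @ [W0, Z0])" and
       Ob = "\<lambda>e. e \<subseteq> W0 \<union> Z0 \<and> e \<inter> W0 \<noteq> {} \<and> e \<inter> Z0 \<noteq> {}" and
       Oc = "\<lambda>e. e \<inter> Z0 \<noteq> {} \<and> meets_two e (Xs @ [W0])" and
       Od = "\<lambda>e. e \<inter> Z0 = {} \<and> meets_two e Xs" and
       D = "\<lambda>e. e \<inter> Q \<noteq> {} \<and> e \<inter> (V - Q) \<noteq> {}" and
       H = "\<lambda>e. e \<inter> (W0 \<inter> Q) \<noteq> {} \<and> e \<inter> (V - W0 \<inter> Q) \<noteq> {}", OF edge])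
  show ?thesis by (rule conjI[OF part ineq])
qed

end
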